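(* Let $Z\in\mathbb R^{n\times d}$ ($d\ge n$) with $ZZ^\top$ nonsingular, let $\Sigma$ be symmetric with eigenvalues in $[1/\kappa,1]$, $X=Z\Sigma^{1/2}$, $\sigma>0$, and let $\rho\ge0$ satisfy $I-\frac\rho dZ^\top Z\succ0$. Then $$\mathcal P(A(\rho,\Sigma);\Sigma)-\mathcal P(A(0,\Sigma);\Sigma)\ge\frac{\rho^2\sigma^4}{d}\mathrm{Tr}\Big(\big(I-\tfrac\rho dZZ^\top\big)^{-2}\tfrac{ZZ^\top}{d}\big(\tfrac{ZZ^\top}{d}+\sigma^2I\big)^{-1}\Big),$$ $$\mathcal T(A(\rho,\Sigma);\Sigma)-\mathcal T(A(0,\Sigma);\Sigma)\le\frac{\kappa\sigma^4}{n}\mathrm{Tr}\Big(\big((I-\tfrac\rho dZZ^\top)^{-2}-I\big)\big(\tfrac1dZZ^\top+\kappa\sigma^2I\big)^{-1}\Big).$$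
   Context: $\mathcal P(A;\Sigma):=\frac1d\|\Sigma^{1/2}(AX-I)\|_F^2+\sigma^2\|\Sigma^{1/2}A\|_F^2$, $\mathcal T(A;\Sigma):=\frac1{nd}\|XAX-X\|_F^2+\frac{\sigma^2}{n}\|XA-I\|_F^2$, and $A(\rho,\Sigma):=\big(I-\rho\sigma^2(\Sigma-\frac\rho dX^\top X)^{-1}\big)(X^\top X+d\sigma^2I)^{-1}X^\top$, defined when $\Sigma-\frac\rho dX^\top X\succ0$ (equivalently $I-\frac\rho dZ^\top Z\succ0$). *)

theory Defs
  imports "HOL-Analysis.Analysis"
begin

definition frob2 :: "real^'c^'r \<Rightarrow> real" where
  "frob2 M = (\<Sum>i\<in>UNIV. \<Sum>j\<in>UNIV. (M $ i $ j)^2)"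

definition psd :: "real^'n^'n \<Rightarrow> bool" where
  "psd M \<longleftrightarrow> transpose M = M \<and> (\<forall>x. 0 \<le> x \<bullet> (M *v x))"

definition posdef :: "real^'n^'n \<Rightarrow> bool" where
  "posdef M \<longleftrightarrow> transpose M = M \<and> (\<forall>x. x \<noteq> 0 \<longrightarrow> 0 < x \<bullet> (M *v x))"

definition mat_eigenvalue :: "real^'n^'n \<Rightarrow> real \<Rightarrow> bool" where
  "mat_eigenvalue M l \<longleftrightarrow> (\<exists>v. v \<noteq> 0 \<and> M *v v = l *\<^sub>R v)"

definition matsqrt :: "real^'n^'n \<Rightarrow> real^'n^'n" where
  "matsqrt S = (THE R. psd R \<and> R ** R = S)"

definition calP :: "real \<Rightarrow> real^'d^'n \<Rightarrow> real^'d^'d \<Rightarrow> real^'n^'d \<Rightarrow> real" where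
  "calP \<sigma> X S A =
     frob2 (matsqrt S ** (A ** X - mat 1)) / real CARD('d)
     + \<sigma>^2 * frob2 (matsqrt S ** A)"

text \<open>Training risk T(A;Sigma) (depends on Sigma only through X).\<close>
definition calT :: "real \<Rightarrow> real^'d^'n \<Rightarrow> real^'n^'d \<Rightarrow> real" where
  "calT \<sigma> X A =
     frob2 (X ** A ** X - X) / (real CARD('n) * real CARD('d))
     + \<sigma>^2 / real CARD('n) * frob2 (X ** A - mat 1)"

definition Arho :: "real \<Rightarrow> real \<Rightarrow> real^'d^'n \<Rightarrow> real^'d^'d \<Rightarrow> real^'n^'d" where
  "Arho \<sigma> \<rho> X S =
     (mat 1 - (\<rho> * \<sigma>^2) *\<^sub>R matrix_inv (S - (\<rho> / real CARD('d)) *\<^sub>R (transpose X ** X)))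
     ** matrix_inv (transpose X ** X + (real CARD('d) * \<sigma>^2) *\<^sub>R mat 1)
     ** transpose X"

end

theory Submission
  imports Defs
begin

lemma sym_inner:
  fixes A :: "real^'n^'n"
  assumes "transpose A = A"
  shows "(A *v x) \<bullet> y = x \<bullet> (A *v y)"
  by (metis assms dot_lmul_matrix transpose_matrix_vector)

lemma scalar_zero_lemma:
  fixes a b :: real
  assumes "\<And>t. 2*t*a + t^2*b \<le> 0"
  shows "a = 0"
proof (rule ccontr)
  assume na: "a \<noteq> 0"
  define c where "c = \<bar>b\<bar> + 1"
  have c0: "c > 0" unfolding c_def by simp
  have "2*(a/c)*a + (a/c)^2*b \<le> 0" by (rule assms)
  hence "(2*(a/c)*a + (a/c)^2*b) * c^2 \<le> 0" using c0
    by (simp add: mult_nonpos_nonneg)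
  moreover have "(2*(a/c)*a + (a/c)^2*b) * c^2 = a^2 * (2*c + b)"
    using c0 by (simp add: field_simps power2_eq_square)
  ultimately have "a^2 * (2*c + b) \<le> 0" by simp
  moreover have "2*c + b > 0" unfolding c_def by (cases "b \<ge> 0") auto
  moreover have "a^2 > 0" using na by simp
  ultimately show False by (simp add: mult_le_0_iff)
qed

lemma max_eig:
  fixes A :: "real^'n^'n" and B :: "(real^'n) set"
  assumes sym: "transpose A = A"
    and inv: "\<And>x. (\<forall>u\<in>B. x \<bullet> u = 0) \<Longrightarrow> (\<forall>u\<in>B. (A *v x) \<bullet> u = 0)"
    and ex: "x0 \<noteq> 0" "\<forall>u\<in>B. x0 \<bullet> u = 0"
  shows "\<exists>v l. norm v = 1 \<and> (\<forall>u\<in>B. v \<bullet> u = 0) \<and> A *v v = l *\<^sub>R v"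
proof -
  define V where "V = {x::real^'n. \<forall>u\<in>B. x \<bullet> u = 0}"
  define C where "C = sphere (0::real^'n) 1 \<inter> V"
  define g where "g = (\<lambda>x::real^'n. x \<bullet> (A *v x))"
  have "V = (\<Inter>u\<in>B. {x. x \<bullet> u = 0})" unfolding V_def by auto
  hence "closed V" by (auto intro!: closed_INT closed_Collect_eq continuous_intros)
  hence "compact C" unfolding C_def by (intro compact_Int_closed) auto
  moreover have "C \<noteq> {}"
  proof -
    have "(1/norm x0) *\<^sub>R x0 \<in> C" using ex unfolding C_def V_def by auto
    thus ?thesis by auto
  qed
  moreover have "continuous_on C g" unfolding g_def
    by (intro continuous_intros linear_continuous_on_compose[OF _ matrix_vector_mul_linear] continuous_on_id)
  ultimately have "\<exists>x\<in>C. \<forall>y\<in>C. g y \<le> g x" by (rule continuous_attains_sup)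
  then obtain v where vC: "v \<in> C" and vmax: "\<And>y. y \<in> C \<Longrightarrow> g y \<le> g v"
    by blast
  define l where "l = g v"
  have nv: "norm v = 1" and vV: "v \<in> V" using vC unfolding C_def by auto
  have vv: "v \<bullet> v = 1" using nv by (simp add: norm_eq_1)
  have subV: "\<And>x y c. x \<in> V \<Longrightarrow> y \<in> V \<Longrightarrow> x + c *\<^sub>R y \<in> V"
    unfolding V_def by (auto simp: inner_add_left)
  have claim: "w \<bullet> (A *v v) = 0" if wV: "w \<in> V" and wv: "w \<bullet> v = 0" for w
  proof (rule scalar_zero_lemma[of _ "g w - l * (w \<bullet> w)"])
    fix t :: real
    define y where "y = v + t *\<^sub>R w"
    have yV: "y \<in> V" unfolding y_def using subV[OF vV wV] .
    have yy: "y \<bullet> y = 1 + t^2 * (w \<bullet> w)"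
      unfolding y_def using vv wv
      by (simp add: inner_add_left inner_add_right inner_commute power2_eq_square)
    hence ypos: "y \<bullet> y > 0" by (simp add: add_pos_nonneg)
    hence ny: "norm y > 0" by (simp add: inner_gt_zero_iff)
    have "(1/norm y) *\<^sub>R y \<in> C" unfolding C_def using ny yV V_def
      by (auto simp: inner_add_left)
    hence "g ((1/norm y) *\<^sub>R y) \<le> l" using vmax l_def by simp
    moreover have "g ((1/norm y) *\<^sub>R y) = g y / (y \<bullet> y)"
    proof -
      have "g ((1/norm y) *\<^sub>R y) = (1/norm y)^2 * g y"
        by (simp add: g_def matrix_vector_mult_scaleR power2_eq_square)
      also have "(1/norm y)^2 = 1 / (y \<bullet> y)"
        by (simp add: power_divide power2_norm_eq_inner)
      finally show ?thesis by simp
    qed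
    ultimately have gy: "g y \<le> l * (y \<bullet> y)" using ypos by (simp add: divide_le_eq)
    have "g y = l + 2*t*(w \<bullet> (A *v v)) + t^2 * g w"
    proof -
      have e1: "v \<bullet> (A *v w) = w \<bullet> (A *v v)"
        using sym_inner[OF sym, of w v] by (simp add: inner_commute)
      have "(v + t *\<^sub>R w) \<bullet> (A *v (v + t *\<^sub>R w))
          = v \<bullet> (A *v v) + t * (v \<bullet> (A *v w)) + t * (w \<bullet> (A *v v)) + t^2 * (w \<bullet> (A *v w))"
        by (simp add: matrix_vector_right_distrib matrix_vector_mult_scaleR inner_add_left inner_add_right
             power2_eq_square algebra_simps)
      thus ?thesis using e1 by (simp add: g_def y_def l_def)
    qed
    with gy yy show "2*t*(w \<bullet> (A *v v)) + t^2 * (g w - l * (w \<bullet> w)) \<le> 0"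
      by (simp add: algebra_simps)
  qed
  define w where "w = A *v v - l *\<^sub>R v"
  have AvV: "A *v v \<in> V" using inv vV unfolding V_def by auto
  have wV: "w \<in> V" unfolding w_def using subV[OF AvV vV, of "-l"] by simp
  have wv: "w \<bullet> v = 0" unfolding w_def l_def g_def using vv
    by (simp add: inner_diff_left inner_commute[of "A *v v" v])
  have "w \<bullet> w = w \<bullet> (A *v v) - l * (w \<bullet> v)"
    by (simp add: w_def inner_diff_right)
  also have "\<dots> = 0" using claim[OF wV wv] wv by simp
  finally have "w = 0" by simp
  hence "A *v v = l *\<^sub>R v" unfolding w_def by simp
  thus ?thesis using nv vV unfolding V_def by blast
qed

lemma spectral_set:
  fixes A :: "real^'n^'n"
  assumes sym: "transpose A = A"
  shows "k \<le> CARD('n) \<Longrightarrow> \<exists>B. finite B \<and> card B = k \<and> pairwise orthogonal B \<and>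
            (\<forall>u\<in>B. norm u = 1 \<and> (\<exists>l. A *v u = l *\<^sub>R u))"
proof (induction k)
  case 0
  show ?case by (intro exI[of _ "{}"]) auto
next
  case (Suc k)
  then obtain B where fB: "finite B" and cB: "card B = k" and oB: "pairwise orthogonal B"
    and eB: "\<forall>u\<in>B. norm u = 1 \<and> (\<exists>l. A *v u = l *\<^sub>R u)" by auto
  have "dim B < DIM(real^'n)"
    using dim_le_card[OF _ fB, of B] span_superset[of B] cB Suc.prems by simp
  then obtain x where x0: "x \<noteq> 0" and xo: "\<And>y. y \<in> span B \<Longrightarrow> orthogonal x y"
    by (rule orthogonal_to_subspace_exists) blast
  have xB: "\<forall>u\<in>B. x \<bullet> u = 0" using xo span_base unfolding orthogonal_def by blast
  have inv: "\<forall>u\<in>B. (A *v z) \<bullet> u = 0" if "\<forall>u\<in>B. z \<bullet> u = 0" for z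
  proof
    fix u assume uB: "u \<in> B"
    then obtain l where "A *v u = l *\<^sub>R u" using eB by blast
    hence "(A *v z) \<bullet> u = l * (z \<bullet> u)" using sym_inner[OF sym, of z u] by simp
    thus "(A *v z) \<bullet> u = 0" using that uB by simp
  qed
  obtain v l where nv: "norm v = 1" and vB: "\<forall>u\<in>B. v \<bullet> u = 0" and ev: "A *v v = l *\<^sub>R v"
    using max_eig[OF sym inv x0 xB] by blast
  have vnB: "v \<notin> B" using vB nv by (metis inner_eq_zero_iff norm_zero zero_neq_one)
  show ?case
  proof (intro exI[of _ "insert v B"] conjI)
    show "finite (insert v B)" using fB by simp
    show "card (insert v B) = Suc k" using fB vnB cB by simp
    show "pairwise orthogonal (insert v B)"
      using oB vB vnB unfolding pairwise_insert orthogonal_def by (auto simp: inner_commute)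
    show "\<forall>u\<in>insert v B. norm u = 1 \<and> (\<exists>l. A *v u = l *\<^sub>R u)" using eB nv ev by auto
  qed
qed

definition dg :: "('n \<Rightarrow> real) \<Rightarrow> real^'n^'n" where
  "dg l = (\<chi> i j. if i = j then l i else 0)"

lemma mul_dg_nth: "((M::real^'n^'m) ** dg l) $ i $ j = M $ i $ j * l j"
  by (simp add: matrix_matrix_mult_def dg_def if_distrib if_distribR cong: if_cong)

lemma dg_mul_nth: "(dg l ** (M::real^'m^'n)) $ i $ j = l i * M $ i $ j"
  by (simp add: matrix_matrix_mult_def dg_def if_distrib if_distribR cong: if_cong)

lemma dg_mul_dg: "dg a ** dg b = dg (\<lambda>i. a i * b i)"
  by (simp add: vec_eq_iff mul_dg_nth) (simp add: dg_def)

lemma transpose_dg: "transpose (dg l) = dg l"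
  by (simp add: vec_eq_iff transpose_def dg_def)

lemma trace_dg_mul: "trace (dg l ** M) = (\<Sum>i\<in>UNIV. l i * M $ i $ i)"
  by (simp add: trace_def dg_mul_nth)

lemma qf_dg: "x \<bullet> (dg l *v x) = (\<Sum>i\<in>UNIV. l i * (x $ i)^2)"
  by (simp add: inner_vec_def matrix_vector_mult_def dg_def if_distrib if_distribR power2_eq_square
      mult_ac cong: if_cong)

lemma column_mult: "column j ((A::real^'m^'n) ** B) = A *v column j B"
  by (simp add: column_def matrix_matrix_mult_def matrix_vector_mult_def vec_eq_iff)

lemma spectral:
  fixes A :: "real^'n^'n"
  assumes sym: "transpose A = A"
  shows "\<exists>U :: real^'n^'n. \<exists>l. transpose U ** U = mat 1 \<and> U ** transpose U = mat 1 \<and>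
    A ** U = U ** dg l \<and> A = U ** dg l ** transpose U"
proof -
  obtain B where fB: "finite B" and cB: "card B = CARD('n)" and oB: "pairwise orthogonal B"
    and eB: "\<forall>u\<in>B. norm u = 1 \<and> (\<exists>l. A *v u = l *\<^sub>R u)"
    using spectral_set[OF sym, of "CARD('n)"] by auto
  obtain f where f: "bij_betw f (UNIV::'n set) B"
    by (metis cB fB finite_class.finite_UNIV finite_same_card_bij)
  have fB': "\<And>i. f i \<in> B" using bij_betwE[OF f] by blast
  define U where "U = (\<chi> i j. f j $ i)"
  define l where "l = (\<lambda>j. SOME c. A *v f j = c *\<^sub>R f j)"
  have colU: "column j U = f j" for j by (simp add: U_def column_def)
  have ortho: "orthogonal_matrix U"
    unfolding orthogonal_matrix_orthonormal_columns colU
  proof (intro conjI allI impI)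
    show "norm (f i) = 1" for i using eB fB' by blast
    show "orthogonal (f i) (f j)" if "i \<noteq> j" for i j
    proof -
      have "f i \<noteq> f j" using f that unfolding bij_betw_def inj_on_def by blast
      thus ?thesis using oB fB' unfolding pairwise_def by blast
    qed
  qed
  have ev: "A *v f j = l j *\<^sub>R f j" for j
  proof -
    obtain c where "A *v f j = c *\<^sub>R f j" using eB fB' by blast
    thus ?thesis unfolding l_def by (rule someI)
  qed
  have AU: "A ** U = U ** dg l"
  proof -
    have "column j (A ** U) = column j (U ** dg l)" for j
    proof -
      have "column j (A ** U) = l j *\<^sub>R f j" by (simp add: column_mult colU ev)
      moreover have "column j (U ** dg l) = l j *\<^sub>R f j"
        by (simp add: column_def mul_dg_nth vec_eq_iff U_def mult.commute)
      ultimately show ?thesis by simp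
    qed
    thus ?thesis by (simp add: vec_eq_iff column_def)
  qed
  have t1: "transpose U ** U = mat 1" and t2: "U ** transpose U = mat 1"
    using ortho unfolding orthogonal_matrix_def by auto
  have "A = A ** (U ** transpose U)" using t2 by simp
  also have "\<dots> = U ** dg l ** transpose U" using AU by (simp add: matrix_mul_assoc)
  finally show ?thesis using t1 t2 AU by blast
qed

lemma tmul_nth: "(transpose (U::real^'n^'m) ** M ** U) $ i $ j = column i U \<bullet> (M *v column j U)"
proof -
  have "(transpose U ** (M ** U)) $ i $ j = column i U \<bullet> column j (M ** U)"
    by (simp add: matrix_matrix_mult_def transpose_def column_def inner_vec_def)
  thus ?thesis by (simp add: column_mult matrix_mul_assoc)
qed

lemma dot_mv: "x \<bullet> ((U::real^'n^'m) *v w) = (transpose U *v x) \<bullet> w"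
  by (simp add: dot_lmul_matrix)

lemma qf_conj: "x \<bullet> (((U::real^'n^'m) ** D ** transpose U) *v x)
    = (transpose U *v x) \<bullet> (D *v (transpose U *v x))"
proof -
  have "((U ** D ** transpose U) *v x) = U *v (D *v (transpose U *v x))"
    by (simp only: matrix_vector_mul_assoc matrix_mul_assoc)
  show ?thesis unfolding \<open>((U ** D ** transpose U) *v x) = U *v (D *v (transpose U *v x))\<close> by (rule dot_mv)
qed

lemma psd_spec:
  fixes P :: "real^'n^'n"
  assumes "psd P"
  shows "\<exists>U::real^'n^'n. \<exists>l. transpose U ** U = mat 1 \<and> U ** transpose U = mat 1 \<and>
    P = U ** dg l ** transpose U \<and> (\<forall>i. l i \<ge> 0)"
proof -
  have sym: "transpose P = P" using assms unfolding psd_def by simp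
  obtain U :: "real^'n^'n" and l where t1: "transpose U ** U = mat 1" and t2: "U ** transpose U = mat 1"
    and PU: "P ** U = U ** dg l" and Pe: "P = U ** dg l ** transpose U"
    using spectral[OF sym] by blast
  have "transpose U ** P ** U = dg l"
    using PU t1 by (simp add: matrix_mul_assoc[symmetric]) (simp add: matrix_mul_assoc)
  hence "l i = column i U \<bullet> (P *v column i U)" for i
    using tmul_nth[of U P i i] by (simp add: dg_def)
  hence "l i \<ge> 0" for i using assms unfolding psd_def by simp
  thus ?thesis using t1 t2 Pe by blast
qed

lemma psd_dg_conj:
  assumes "\<And>i. l i \<ge> 0"
  shows "psd ((U::real^'n^'n) ** dg l ** transpose U)"
  unfolding psd_def
proof (intro conjI allI)
  show "transpose (U ** dg l ** transpose U) = U ** dg l ** transpose U"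
    by (simp add: matrix_transpose_mul transpose_dg matrix_mul_assoc)
  show "0 \<le> x \<bullet> ((U ** dg l ** transpose U) *v x)" for x
    unfolding qf_conj qf_dg using assms by (intro sum_nonneg) simp
qed

lemma psd_sqrt_exists:
  fixes S :: "real^'n^'n"
  assumes "psd S"
  shows "\<exists>R. psd R \<and> R ** R = S"
proof -
  obtain U :: "real^'n^'n" and l where t1: "transpose U ** U = mat 1" and t2: "U ** transpose U = mat 1"
    and Se: "S = U ** dg l ** transpose U" and l0: "\<forall>i. l i \<ge> 0"
    using psd_spec[OF assms] by blast
  define R where "R = U ** dg (\<lambda>i. sqrt (l i)) ** transpose U"
  have "psd R" unfolding R_def using psd_dg_conj[of "\<lambda>i. sqrt (l i)" U] l0 by simp
  moreover have "R ** R = S"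
  proof -
    have "R ** R = U ** dg (\<lambda>i. sqrt (l i)) ** (transpose U ** U) ** dg (\<lambda>i. sqrt (l i)) ** transpose U"
      unfolding R_def by (simp add: matrix_mul_assoc)
    also have "\<dots> = U ** (dg (\<lambda>i. sqrt (l i)) ** dg (\<lambda>i. sqrt (l i))) ** transpose U"
      using t1 by (simp add: matrix_mul_assoc)
    also have "dg (\<lambda>i. sqrt (l i)) ** dg (\<lambda>i. sqrt (l i)) = dg l"
      using l0 by (simp add: dg_mul_dg real_sqrt_mult[symmetric])
    finally show ?thesis using Se by simp
  qed
  ultimately show ?thesis by blast
qed

lemma psd_sqrt_unique_aux:
  fixes S R U :: "real^'n^'n"
  assumes t1: "transpose U ** U = mat 1" and t2: "U ** transpose U = mat 1"
    and Se: "S = U ** dg l ** transpose U"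
    and R: "psd R" "R ** R = S"
  shows "R = U ** dg (\<lambda>i. sqrt (l i)) ** transpose U"
proof -
  obtain V :: "real^'n^'n" and m where v1: "transpose V ** V = mat 1" and v2: "V ** transpose V = mat 1"
    and Re: "R = V ** dg m ** transpose V" and m0: "\<forall>i. m i \<ge> 0"
    using psd_spec[OF R(1)] by blast
  define W where "W = transpose U ** V"
  have RV: "R ** V = V ** dg m" using Re v1 by (simp add: matrix_mul_assoc[symmetric])
  have SV: "S ** V = V ** dg (\<lambda>i. m i * m i)"
  proof -
    have "S ** V = R ** (R ** V)" using R(2) by (simp add: matrix_mul_assoc)
    also have "\<dots> = V ** (dg m ** dg m)" using RV by (simp add: matrix_mul_assoc)
    finally show ?thesis by (simp add: dg_mul_dg)
  qed
  have "dg l ** W = W ** dg (\<lambda>i. m i * m i)"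
  proof -
    have "transpose U ** S ** V = dg l ** W"
      unfolding Se W_def using t1 by (simp add: matrix_mul_assoc[symmetric]) (simp add: matrix_mul_assoc)
    moreover have "transpose U ** S ** V = W ** dg (\<lambda>i. m i * m i)"
      unfolding W_def using SV by (simp add: matrix_mul_assoc[symmetric])
    ultimately show ?thesis by simp
  qed
  hence eq: "l i * W $ i $ j = W $ i $ j * (m j * m j)" for i j
  proof -
    assume h: "dg l ** W = W ** dg (\<lambda>i. m i * m i)"
    have "(dg l ** W) $ i $ j = (W ** dg (\<lambda>i. m i * m i)) $ i $ j" by (simp only: h)
    thus ?thesis by (simp only: dg_mul_nth mul_dg_nth)
  qed
  have "dg (\<lambda>i. sqrt (l i)) ** W = W ** dg m"
  proof -
    have "sqrt (l i) * W $ i $ j = W $ i $ j * m j" for i j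
    proof (cases "W $ i $ j = 0")
      case True thus ?thesis by simp
    next
      case False
      hence "l i = m j * m j" using eq[of i j] by simp
      thus ?thesis using m0 by (simp add: real_sqrt_mult)
    qed
    thus ?thesis by (simp add: vec_eq_iff dg_mul_nth mul_dg_nth)
  qed
  have "U ** dg (\<lambda>i. sqrt (l i)) ** transpose U = U ** dg (\<lambda>i. sqrt (l i)) ** (W ** transpose V)"
    unfolding W_def using v2 by (simp add: matrix_mul_assoc[symmetric])
  also have "\<dots> = U ** (dg (\<lambda>i. sqrt (l i)) ** W) ** transpose V" by (simp add: matrix_mul_assoc)
  also have "\<dots> = (U ** W) ** dg m ** transpose V"
    using \<open>dg (\<lambda>i. sqrt (l i)) ** W = W ** dg m\<close> by (simp add: matrix_mul_assoc)
  also have "U ** W = V" unfolding W_def using t2 by (simp add: matrix_mul_assoc)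
  finally show ?thesis using Re by simp
qed

lemma matsqrt_props:
  fixes S :: "real^'n^'n"
  assumes "psd S"
  shows "psd (matsqrt S) \<and> matsqrt S ** matsqrt S = S"
proof -
  obtain U :: "real^'n^'n" and l where t1: "transpose U ** U = mat 1" and t2: "U ** transpose U = mat 1"
    and Se: "S = U ** dg l ** transpose U" and l0: "\<forall>i. l i \<ge> 0"
    using psd_spec[OF assms] by blast
  obtain R where R: "psd R \<and> R ** R = S" using psd_sqrt_exists[OF assms] by blast
  have "\<exists>!R. psd R \<and> R ** R = S"
  proof (rule ex1I[of _ R])
    show "psd R \<and> R ** R = S" by (rule R)
    fix R' assume "psd R' \<and> R' ** R' = S"
    hence "R' = U ** dg (\<lambda>i. sqrt (l i)) ** transpose U" using psd_sqrt_unique_aux[OF t1 t2 Se] by blast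
    moreover have "R = U ** dg (\<lambda>i. sqrt (l i)) ** transpose U" using psd_sqrt_unique_aux[OF t1 t2 Se] R by blast
    ultimately show "R' = R" by simp
  qed
  thus ?thesis unfolding matsqrt_def by (rule theI')
qed

lemma trace_psd_nonneg:
  fixes P D :: "real^'n^'n"
  assumes "psd P" "psd D"
  shows "trace (P ** D) \<ge> 0"
proof -
  obtain U :: "real^'n^'n" and l where Pe: "P = U ** dg l ** transpose U" and l0: "\<forall>i. l i \<ge> 0"
    using psd_spec[OF assms(1)] by blast
  have "trace (P ** D) = trace (U ** (dg l ** transpose U ** D))"
    unfolding Pe by (simp add: matrix_mul_assoc)
  also have "\<dots> = trace (dg l ** (transpose U ** D ** U))"
    by (subst trace_mul_sym) (simp add: matrix_mul_assoc)
  also have "\<dots> = (\<Sum>i\<in>UNIV. l i * (column i U \<bullet> (D *v column i U)))"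
    by (simp add: trace_dg_mul tmul_nth)
  also have "\<dots> \<ge> 0" using l0 assms(2) unfolding psd_def by (intro sum_nonneg mult_nonneg_nonneg) auto
  finally show ?thesis .
qed

definition fi :: "real^'c^'r \<Rightarrow> real^'c^'r \<Rightarrow> real" where
  "fi U V = (\<Sum>i\<in>UNIV. \<Sum>j\<in>UNIV. U $ i $ j * V $ i $ j)"

lemma frob2_fi: "frob2 U = fi U U"
  by (simp add: frob2_def fi_def power2_eq_square)

lemma fi_comm: "fi U V = fi V U"
  by (simp add: fi_def mult.commute)

lemma fi_add_left: "fi (U + V) W = fi U W + fi V W"
  by (simp add: fi_def algebra_simps sum.distrib)

lemma fi_add_right: "fi W (U + V) = fi W U + fi W V"
  by (simp add: fi_def algebra_simps sum.distrib)

lemma fi_diff_left: "fi (U - V) W = fi U W - fi V W"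
  by (simp add: fi_def algebra_simps sum_subtractf)

lemma fi_diff_right: "fi W (U - V) = fi W U - fi W V"
  by (simp add: fi_def algebra_simps sum_subtractf)

lemma fi_scale_left: "fi (c *\<^sub>R U) V = c * fi U V"
  by (simp add: fi_def sum_distrib_left mult_ac)

lemma fi_scale_right: "fi V (c *\<^sub>R U) = c * fi V U"
  by (simp add: fi_def sum_distrib_left mult_ac)

lemma fi_neg_left: "fi (- U) V = - fi U V"
  by (simp add: fi_def sum_negf)

lemma fi_neg_right: "fi V (- U) = - fi V U"
  by (simp add: fi_def sum_negf)

lemma fi_mul_right: "fi U ((V::real^'k^'r) ** (W::real^'c^'k)) = fi (U ** transpose W) V"
proof -
  have "fi U (V ** W) = (\<Sum>i\<in>UNIV. \<Sum>j\<in>UNIV. \<Sum>k\<in>UNIV. U $ i $ j * V $ i $ k * W $ k $ j)"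
    by (simp add: fi_def matrix_matrix_mult_def sum_distrib_left mult_ac)
  also have "\<dots> = (\<Sum>i\<in>UNIV. \<Sum>k\<in>UNIV. \<Sum>j\<in>UNIV. U $ i $ j * V $ i $ k * W $ k $ j)"
    by (rule sum.cong[OF refl], rule sum.swap)
  also have "\<dots> = fi (U ** transpose W) V"
    by (simp add: fi_def matrix_matrix_mult_def transpose_def sum_distrib_left mult_ac)
  finally show ?thesis .
qed

lemma fi_mul_left: "fi U ((W::real^'k^'r) ** (V::real^'c^'k)) = fi (transpose W ** U) V"
proof -
  have "fi U (W ** V) = (\<Sum>i\<in>UNIV. \<Sum>j\<in>UNIV. \<Sum>k\<in>UNIV. U $ i $ j * W $ i $ k * V $ k $ j)"
    by (simp add: fi_def matrix_matrix_mult_def sum_distrib_left mult_ac)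
  also have "\<dots> = (\<Sum>i\<in>UNIV. \<Sum>k\<in>UNIV. \<Sum>j\<in>UNIV. U $ i $ j * W $ i $ k * V $ k $ j)"
    by (rule sum.cong[OF refl], rule sum.swap)
  also have "\<dots> = (\<Sum>k\<in>UNIV. \<Sum>i\<in>UNIV. \<Sum>j\<in>UNIV. U $ i $ j * W $ i $ k * V $ k $ j)"
    by (rule sum.swap)
  also have "\<dots> = (\<Sum>k\<in>UNIV. \<Sum>j\<in>UNIV. \<Sum>i\<in>UNIV. U $ i $ j * W $ i $ k * V $ k $ j)"
    by (rule sum.cong[OF refl], rule sum.swap)
  also have "\<dots> = fi (transpose W ** U) V"
    by (simp add: fi_def matrix_matrix_mult_def transpose_def sum_distrib_left mult_ac)
  finally show ?thesis .
qed

lemma fi_trace: "fi U (V::real^'c^'r) = trace (transpose U ** V)"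
proof -
  have "fi U V = (\<Sum>j\<in>UNIV. \<Sum>i\<in>UNIV. U $ i $ j * V $ i $ j)"
    unfolding fi_def by (rule sum.swap)
  thus ?thesis by (simp add: trace_def matrix_matrix_mult_def transpose_def)
qed

lemma minv:
  fixes A :: "real^'n^'n"
  assumes "invertible A"
  shows "A ** matrix_inv A = mat 1" "matrix_inv A ** A = mat 1"
proof -
  have "\<exists>A'. A ** A' = mat 1 \<and> A' ** A = mat 1" using assms unfolding invertible_def by blast
  hence "A ** matrix_inv A = mat 1 \<and> matrix_inv A ** A = mat 1"
    unfolding matrix_inv_def by (rule someI_ex)
  thus "A ** matrix_inv A = mat 1" "matrix_inv A ** A = mat 1" by auto
qed

lemma minv_unique:
  fixes A B :: "real^'n^'n"
  assumes "B ** A = mat 1"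
  shows "matrix_inv A = B"
proof -
  have inv: "invertible A" using assms invertible_left_inverse by blast
  have "B = B ** (A ** matrix_inv A)" using minv(1)[OF inv] by simp
  also have "\<dots> = matrix_inv A" using assms by (simp add: matrix_mul_assoc)
  finally show ?thesis by simp
qed

lemma minv_invertible: "invertible (A::real^'n^'n) \<Longrightarrow> invertible (matrix_inv A)"
  using minv invertible_left_inverse by blast

lemma minv_mult:
  fixes A B :: "real^'n^'n"
  assumes "invertible A" "invertible B"
  shows "matrix_inv (A ** B) = matrix_inv B ** matrix_inv A"
proof (rule minv_unique)
  have "matrix_inv B ** matrix_inv A ** (A ** B) = matrix_inv B ** (matrix_inv A ** A) ** B"
    by (simp add: matrix_mul_assoc)
  thus "matrix_inv B ** matrix_inv A ** (A ** B) = mat 1"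
    using minv[OF assms(1)] minv[OF assms(2)] by simp
qed

lemma minv_scale:
  fixes A :: "real^'n^'n"
  assumes "invertible A" "c \<noteq> 0"
  shows "matrix_inv (c *\<^sub>R A) = (1/c) *\<^sub>R matrix_inv A"
  by (rule minv_unique) (simp add: assms minv(2)[OF assms(1)] matrix_scalar_ac scalar_matrix_assoc[symmetric])

lemma minv_one: "matrix_inv (mat 1 :: real^'n^'n) = mat 1"
  by (rule minv_unique) simp

lemma minv_sym:
  fixes A :: "real^'n^'n"
  assumes "invertible A" "transpose A = A"
  shows "transpose (matrix_inv A) = matrix_inv A"
proof -
  have "transpose (matrix_inv A) ** A = mat 1"
    using arg_cong[OF minv(1)[OF assms(1)], of transpose] assms(2) by (simp add: matrix_transpose_mul)
  hence "matrix_inv A = transpose (matrix_inv A)" by (rule minv_unique)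
  thus ?thesis by simp
qed

lemma posdef_invertible:
  fixes A :: "real^'n^'n"
  assumes "\<And>x. x \<noteq> 0 \<Longrightarrow> 0 < x \<bullet> (A *v x)"
  shows "invertible A"
proof -
  have "\<forall>x. A *v x = 0 \<longrightarrow> x = 0" using assms by (metis inner_zero_right less_irrefl)
  thus ?thesis using invertible_left_inverse matrix_left_invertible_ker by blast
qed

lemma inv_mono:
  fixes A B :: "real^'n^'n"
  assumes sA: "transpose A = A" and iA: "invertible A" and iB: "invertible B"
    and pA: "\<And>x. 0 \<le> x \<bullet> (A *v x)" and le: "\<And>x. x \<bullet> (A *v x) \<le> x \<bullet> (B *v x)"
  shows "x \<bullet> (matrix_inv B *v x) \<le> x \<bullet> (matrix_inv A *v x)"
proof -
  define y where "y = matrix_inv B *v x"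
  define z where "z = matrix_inv A *v x"
  have By: "B *v y = x" unfolding y_def by (simp add: matrix_vector_mul_assoc minv(1)[OF iB])
  have Az: "A *v z = x" unfolding z_def by (simp add: matrix_vector_mul_assoc minv(1)[OF iA])
  have sz: "y \<bullet> (A *v z) = z \<bullet> (A *v y)" using sym_inner[OF sA, of y z] by (simp add: inner_commute)
  have "0 \<le> (y - z) \<bullet> (A *v (y - z))" by (rule pA)
  also have "\<dots> = y \<bullet> (A *v y) - 2 * (y \<bullet> (A *v z)) + z \<bullet> (A *v z)"
    using sz by (simp add: matrix_vector_mult_diff_distrib inner_diff_left inner_diff_right)
  also have "y \<bullet> (A *v z) = y \<bullet> x" by (simp only: Az)
  also have "z \<bullet> (A *v z) = z \<bullet> x" by (simp only: Az)
  finally have i1: "0 \<le> y \<bullet> (A *v y) - 2 * (y \<bullet> x) + z \<bullet> x" .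
  have i2: "y \<bullet> x = y \<bullet> (B *v y)" by (simp only: By)
  have "y \<bullet> (A *v y) \<le> y \<bullet> (B *v y)" by (rule le)
  with i1 i2 have "y \<bullet> x \<le> z \<bullet> x" by linarith
  thus ?thesis unfolding y_def z_def by (simp add: inner_commute)
qed

lemma eig_bounds:
  fixes S :: "real^'n^'n"
  assumes sym: "transpose S = S" and ev: "\<And>l. mat_eigenvalue S l \<Longrightarrow> a \<le> l \<and> l \<le> b"
  shows "a * (x \<bullet> x) \<le> x \<bullet> (S *v x) \<and> x \<bullet> (S *v x) \<le> b * (x \<bullet> x)"
proof -
  obtain U :: "real^'n^'n" and l where t1: "transpose U ** U = mat 1" and t2: "U ** transpose U = mat 1"
    and SU: "S ** U = U ** dg l" and Se: "S = U ** dg l ** transpose U"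
    using spectral[OF sym] by blast
  have lb: "a \<le> l j \<and> l j \<le> b" for j
  proof (rule ev)
    have "column j U \<bullet> column j U = 1"
      using arg_cong[OF t1, of "\<lambda>M. M$j$j"] by (simp add: matrix_mult_transpose_dot_column mat_def)
    hence nz: "column j U \<noteq> 0" by auto
    have "S *v column j U = column j (S ** U)" by (simp add: column_mult)
    also have "\<dots> = l j *\<^sub>R column j U" unfolding SU
      by (simp add: column_def mul_dg_nth vec_eq_iff mult.commute)
    finally show "mat_eigenvalue S (l j)" unfolding mat_eigenvalue_def using nz by blast
  qed
  define y where "y = transpose U *v x"
  have q: "x \<bullet> (S *v x) = (\<Sum>i\<in>UNIV. l i * (y $ i)^2)"
    unfolding y_def by (subst Se) (simp add: qf_conj qf_dg)
  have "x \<bullet> x = y \<bullet> y"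
  proof -
    have "y \<bullet> y = x \<bullet> (U *v y)" unfolding y_def by (rule dot_mv[symmetric])
    also have "U *v y = x" unfolding y_def by (simp only: matrix_vector_mul_assoc t2 matrix_vector_mul_lid)
    finally show ?thesis by simp
  qed
  hence xx: "x \<bullet> x = (\<Sum>i\<in>UNIV. (y $ i)^2)" by (simp add: inner_vec_def power2_eq_square)
  have "a * (x \<bullet> x) \<le> x \<bullet> (S *v x)" unfolding q xx sum_distrib_left
    using lb by (intro sum_mono mult_right_mono) auto
  moreover have "x \<bullet> (S *v x) \<le> b * (x \<bullet> x)" unfolding q xx sum_distrib_left
    using lb by (intro sum_mono mult_right_mono) auto
  ultimately show ?thesis by blast
qed

lemma mm_diff_l: "(A::real^'m^'n) ** (B - C) = A ** B - A ** C"
  by (simp add: matrix_matrix_mult_def vec_eq_iff sum_subtractf right_diff_distrib)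
lemma mm_diff_r: "((B::real^'m^'n) - C) ** A = B ** A - C ** A"
  by (simp add: matrix_matrix_mult_def vec_eq_iff sum_subtractf left_diff_distrib)
lemma mm_add_r: "((B::real^'m^'n) + C) ** A = B ** A + C ** A"
  by (simp add: matrix_matrix_mult_def vec_eq_iff sum.distrib distrib_right)
lemma mm_neg_l: "(- (B::real^'m^'n)) ** A = - (B ** A)"
  by (simp add: matrix_matrix_mult_def vec_eq_iff sum_negf)
lemma mm_neg_r: "(A::real^'m^'n) ** (- B) = - (A ** B)"
  by (simp add: matrix_matrix_mult_def vec_eq_iff sum_negf)
lemma tr_diff: "transpose ((A::real^'m^'n) - B) = transpose A - transpose B"
  by (simp add: transpose_def vec_eq_iff)
lemma tr_add: "transpose ((A::real^'m^'n) + B) = transpose A + transpose B"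
  by (simp add: transpose_def vec_eq_iff)
lemma tr_neg: "transpose (- (A::real^'m^'n)) = - transpose A"
  by (simp add: transpose_def vec_eq_iff)
lemma mm_scale_l: "(k *\<^sub>R (A::real^'m^'n)) ** B = k *\<^sub>R (A ** B)"
  by (simp add: scalar_matrix_assoc)
lemma mm_scale_r: "(A::real^'m^'n) ** (k *\<^sub>R B) = k *\<^sub>R (A ** B)"
  by (simp add: matrix_scalar_ac scalar_matrix_assoc)
lemma mat1_scale_mul: "(k *\<^sub>R mat 1) ** (A::real^'m^'n) = k *\<^sub>R A"
  by (simp add: mm_scale_l)
lemma mul_mat1_scale: "(A::real^'m^'n) ** (k *\<^sub>R mat 1) = k *\<^sub>R A"
  by (simp add: mm_scale_r)

lemmas mms = matrix_mul_assoc mm_diff_l mm_diff_r mm_add_r matrix_add_ldistrib mm_neg_l mm_neg_r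
   mm_scale_l mm_scale_r matrix_transpose_mul tr_diff tr_add tr_neg transpose_scalar

lemma qf_AtA: "x \<bullet> ((transpose A ** A) *v x) = (A *v x) \<bullet> (A *v (x::real^'m))"
proof -
  have "(transpose A ** A) *v x = transpose A *v (A *v x)" by (simp only: matrix_vector_mul_assoc)
  hence "x \<bullet> ((transpose A ** A) *v x) = (transpose (transpose A) *v x) \<bullet> (A *v x)"
    by (simp only: dot_mv)
  thus ?thesis by (simp only: transpose_transpose)
qed

lemma posdef_AtA_plus:
  fixes A :: "real^'m^'n"
  assumes "a > 0"
  shows "invertible (transpose A ** A + a *\<^sub>R mat 1)"
proof (rule posdef_invertible)
  fix x :: "real^'m" assume "x \<noteq> 0"
  have "x \<bullet> ((transpose A ** A + a *\<^sub>R mat 1) *v x) = (A *v x) \<bullet> (A *v x) + a * (x \<bullet> x)"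
    by (simp add: matrix_vector_mult_add_rdistrib inner_add_right qf_AtA scaleR_matrix_vector_assoc[symmetric])
  moreover have "a * (x \<bullet> x) > 0" using assms \<open>x \<noteq> 0\<close> by simp
  ultimately show "0 < x \<bullet> ((transpose A ** A + a *\<^sub>R mat 1) *v x)"
    by (simp add: add_nonneg_pos)
qed

lemma sym_AtA_plus: "transpose (transpose A ** A + a *\<^sub>R mat 1) = transpose A ** (A::real^'m^'n) + a *\<^sub>R mat 1"
  by (simp add: tr_add matrix_transpose_mul transpose_scalar)

definition KK :: "real \<Rightarrow> real^'d^'n \<Rightarrow> real^'d^'d" where
  "KK c Z = mat 1 - c *\<^sub>R (transpose Z ** Z)"
definition MM :: "real \<Rightarrow> real^'d^'n \<Rightarrow> real^'n^'n" where
  "MM c Z = matrix_inv (mat 1 - c *\<^sub>R (Z ** transpose Z))"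
definition QQ :: "real \<Rightarrow> real^'d^'n \<Rightarrow> real^'n^'n" where
  "QQ s X = matrix_inv (X ** transpose X + (real CARD('d) * s^2) *\<^sub>R mat 1)"

lemma QQ_inv: "s > 0 \<Longrightarrow> invertible ((X::real^'d^'n) ** transpose X + (real CARD('d) * s^2) *\<^sub>R mat 1)"
  using posdef_AtA_plus[of "real CARD('d) * s^2" "transpose X"] by simp

lemma L1:
  fixes Z :: "real^'d^'n" and R S :: "real^'d^'d"
  assumes Rs: "transpose R = R" and RR: "R ** R = S" and Ri: "invertible R" and sp: "\<sigma> > 0"
    and Ki: "invertible (KK (r / real CARD('d)) Z)"
  shows "Arho \<sigma> r (Z ** R) S = transpose (Z ** R) ** QQ \<sigma> (Z ** R)
     - (r * \<sigma>^2) *\<^sub>R (matrix_inv R ** matrix_inv (KK (r / real CARD('d)) Z) ** transpose Z ** QQ \<sigma> (Z ** R))"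
proof -
  define X where "X = Z ** R"
  define d where "d = real CARD('d)"
  define a where "a = d * \<sigma>^2"
  define c where "c = r / d"
  define K where "K = KK c Z"
  define Q where "Q = QQ \<sigma> X"
  have ap: "a > 0" unfolding a_def d_def using sp by simp
  have h1: "transpose X = R ** transpose Z" unfolding X_def using Rs by (simp add: matrix_transpose_mul)
  have h2: "S - c *\<^sub>R (transpose X ** X) = R ** K ** R"
    unfolding K_def KK_def h1 X_def using RR Rs by (simp add: mms)
  have Kinv: "invertible K" using Ki unfolding K_def c_def d_def .
  have h3: "matrix_inv (R ** K ** R) = matrix_inv R ** matrix_inv K ** matrix_inv R"
    using Ri Kinv by (simp add: minv_mult invertible_mult matrix_mul_assoc)
  have Pi: "invertible (transpose X ** X + a *\<^sub>R mat 1)" by (rule posdef_AtA_plus[OF ap])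
  have Qi: "invertible (X ** transpose X + a *\<^sub>R mat 1)"
    using QQ_inv[OF sp, of X] unfolding a_def d_def .
  have comm: "(transpose X ** X + a *\<^sub>R mat 1) ** transpose X = transpose X ** (X ** transpose X + a *\<^sub>R mat 1)"
    by (simp add: mms)
  have h4: "matrix_inv (transpose X ** X + a *\<^sub>R mat 1) ** transpose X = transpose X ** Q"
  proof -
    let ?P = "transpose X ** X + a *\<^sub>R mat 1" and ?Y = "X ** transpose X + a *\<^sub>R mat 1"
    have "matrix_inv ?P ** transpose X = matrix_inv ?P ** transpose X ** (?Y ** matrix_inv ?Y)"
      using minv(1)[OF Qi] by simp
    also have "\<dots> = matrix_inv ?P ** (?P ** transpose X) ** matrix_inv ?Y"
      using comm by (simp add: matrix_mul_assoc)
    also have "\<dots> = transpose X ** matrix_inv ?Y"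
      using minv(2)[OF Pi] by (simp add: matrix_mul_assoc)
    finally show ?thesis unfolding Q_def QQ_def a_def d_def .
  qed
  have h5: "matrix_inv R ** transpose X = transpose Z"
    unfolding h1 using minv(2)[OF Ri] by (simp add: matrix_mul_assoc)
  have "Arho \<sigma> r X S = (mat 1 - (r * \<sigma>^2) *\<^sub>R (matrix_inv R ** matrix_inv K ** matrix_inv R))
      ** (matrix_inv (transpose X ** X + a *\<^sub>R mat 1) ** transpose X)"
    unfolding Arho_def using h2 h3 by (simp add: c_def d_def a_def matrix_mul_assoc)
  also have "\<dots> = transpose X ** Q - (r * \<sigma>^2) *\<^sub>R (matrix_inv R ** matrix_inv K ** (matrix_inv R ** transpose X) ** Q)"
    unfolding h4 by (simp add: mms)
  also have "\<dots> = transpose X ** Q - (r * \<sigma>^2) *\<^sub>R (matrix_inv R ** matrix_inv K ** transpose Z ** Q)"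
    unfolding h5 ..
  finally show ?thesis unfolding X_def Q_def K_def c_def d_def .
qed

lemma KK_sym: "transpose (KK c Z) = KK c Z"
  by (simp add: KK_def tr_diff transpose_scalar matrix_transpose_mul)

lemma M_invertible:
  fixes Z :: "real^'d^'n"
  assumes Ki: "invertible (KK c Z)"
  shows "invertible (mat 1 - c *\<^sub>R (Z ** transpose Z))"
proof -
  let ?L = "mat 1 - c *\<^sub>R (Z ** transpose Z)"
  have KZ: "KK c Z ** transpose Z = transpose Z ** ?L" by (simp add: KK_def mms)
  have "x = 0" if h: "?L *v x = 0" for x
  proof -
    have "KK c Z *v (transpose Z *v x) = transpose Z *v (?L *v x)"
      by (simp only: matrix_vector_mul_assoc KZ)
    hence "KK c Z *v (transpose Z *v x) = 0" using h by simp
    hence "transpose Z *v x = 0"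
      using inj_matrix_vector_mult[OF Ki] by (metis inj_eq matrix_vector_mult_0_right)
    hence Gx: "(Z ** transpose Z) *v x = 0" by (simp only: matrix_vector_mul_assoc[symmetric]) simp
    have "x = ?L *v x + c *\<^sub>R ((Z ** transpose Z) *v x)"
      by (simp add: matrix_vector_mult_diff_rdistrib scaleR_matrix_vector_assoc)
    thus ?thesis using h Gx by simp
  qed
  thus ?thesis using invertible_left_inverse matrix_left_invertible_ker by blast
qed

lemma M_facts:
  fixes Z :: "real^'d^'n"
  assumes Ki: "invertible (KK c Z)"
  shows "Z ** matrix_inv (KK c Z) = MM c Z ** Z"
    and "MM c Z ** (Z ** transpose Z) = (Z ** transpose Z) ** MM c Z"
    and "MM c Z - c *\<^sub>R (MM c Z ** (Z ** transpose Z)) = mat 1"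
    and "transpose (MM c Z) = MM c Z"
    and "invertible (MM c Z)"
proof -
  let ?L = "mat 1 - c *\<^sub>R (Z ** transpose Z)"
  let ?G = "Z ** transpose Z"
  have Li: "invertible ?L" by (rule M_invertible[OF Ki])
  have LZ: "?L ** Z = Z ** KK c Z" by (simp add: KK_def mms)
  show "Z ** matrix_inv (KK c Z) = MM c Z ** Z"
  proof -
    have "MM c Z ** Z = MM c Z ** (?L ** Z) ** matrix_inv (KK c Z)"
      unfolding LZ using minv(1)[OF Ki] by (simp add: matrix_mul_assoc[symmetric])
    also have "\<dots> = Z ** matrix_inv (KK c Z)"
      unfolding MM_def using minv(2)[OF Li] by (simp add: matrix_mul_assoc)
    finally show ?thesis by simp
  qed
  have LG: "?L ** ?G = ?G ** ?L" by (simp add: mms)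
  show "MM c Z ** ?G = ?G ** MM c Z"
  proof -
    have "?G ** MM c Z = MM c Z ** (?L ** ?G) ** MM c Z"
      unfolding MM_def using minv(2)[OF Li] by (simp add: matrix_mul_assoc)
    also have "\<dots> = MM c Z ** ?G"
      unfolding LG MM_def using minv(1)[OF Li] by (simp add: matrix_mul_assoc[symmetric])
    finally show ?thesis by simp
  qed
  show "MM c Z - c *\<^sub>R (MM c Z ** ?G) = mat 1"
    using minv(2)[OF Li] unfolding MM_def by (simp add: mms)
  show "transpose (MM c Z) = MM c Z"
    unfolding MM_def by (rule minv_sym[OF Li]) (simp add: tr_diff transpose_scalar matrix_transpose_mul)
  show "invertible (MM c Z)" unfolding MM_def by (rule minv_invertible[OF Li])
qed

lemma L2:
  fixes Z :: "real^'d^'n" and R S :: "real^'d^'d"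
  assumes Rs: "transpose R = R" and RR: "R ** R = S" and Ri: "invertible R" and sp: "\<sigma> > 0"
    and Ki: "invertible (KK (r / real CARD('d)) Z)"
  shows "(Z ** R) ** Arho \<sigma> r (Z ** R) S - mat 1
      = - (real CARD('d) * \<sigma>^2) *\<^sub>R (MM (r / real CARD('d)) Z ** QQ \<sigma> (Z ** R))"
proof -
  define X where "X = Z ** R"
  define d where "d = real CARD('d)"
  define a where "a = d * \<sigma>^2"
  define c where "c = r / d"
  define K where "K = KK c Z"
  define Q where "Q = QQ \<sigma> X"
  define M where "M = MM c Z"
  define G where "G = Z ** transpose Z"
  have dp: "d > 0" unfolding d_def by simp
  have Kinv: "invertible K" using Ki unfolding K_def c_def d_def .
  have ZK: "Z ** matrix_inv K = M ** Z" using M_facts(1)[OF Kinv[unfolded K_def]] unfolding K_def M_def .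
  have Mid: "M - c *\<^sub>R (M ** G) = mat 1" using M_facts(3)[OF Kinv[unfolded K_def]] unfolding M_def G_def .
  have Qi: "invertible (X ** transpose X + a *\<^sub>R mat 1)"
    using QQ_inv[OF sp, of X] unfolding a_def d_def .
  have XQ: "X ** transpose X ** Q = mat 1 - a *\<^sub>R Q"
  proof -
    have "(X ** transpose X + a *\<^sub>R mat 1) ** Q = mat 1"
      using minv(1)[OF Qi] unfolding Q_def QQ_def a_def d_def .
    thus ?thesis by (simp add: mms algebra_simps)
  qed
  have XR: "X ** matrix_inv R = Z" unfolding X_def using minv(1)[OF Ri] by (simp add: matrix_mul_assoc[symmetric])
  have A: "Arho \<sigma> r X S = transpose X ** Q - (r * \<sigma>^2) *\<^sub>R (matrix_inv R ** matrix_inv K ** transpose Z ** Q)"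
    using L1[OF Rs RR Ri sp Ki] unfolding X_def Q_def K_def c_def d_def .
  have "X ** Arho \<sigma> r X S - mat 1 = X ** transpose X ** Q - (r * \<sigma>^2) *\<^sub>R ((X ** matrix_inv R) ** matrix_inv K ** transpose Z ** Q) - mat 1"
    unfolding A by (simp add: mms)
  also have "\<dots> = - (a *\<^sub>R Q + (r * \<sigma>^2) *\<^sub>R (M ** G ** Q))"
    unfolding XR XQ using ZK by (simp add: G_def matrix_mul_assoc algebra_simps)
  also have "a *\<^sub>R Q + (r * \<sigma>^2) *\<^sub>R (M ** G ** Q) = a *\<^sub>R (M ** Q)"
  proof -
    have "M = mat 1 + c *\<^sub>R (M ** G)" using Mid by (simp add: algebra_simps)
    hence "a *\<^sub>R (M ** Q) = a *\<^sub>R ((mat 1 + c *\<^sub>R (M ** G)) ** Q)" by simp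
    also have "\<dots> = a *\<^sub>R Q + (a * c) *\<^sub>R (M ** G ** Q)" by (simp add: mms algebra_simps)
    also have "a * c = r * \<sigma>^2" unfolding a_def c_def using dp by simp
    finally show ?thesis by simp
  qed
  finally show ?thesis unfolding X_def a_def M_def Q_def c_def d_def by simp
qed

lemma L3:
  fixes Z :: "real^'d^'n" and R S :: "real^'d^'d"
  assumes Rs: "transpose R = R" and RR: "R ** R = S" and Ri: "invertible R" and sp: "\<sigma> > 0"
    and Ki: "invertible (KK (r / real CARD('d)) Z)"
  shows "calT \<sigma> (Z ** R) (Arho \<sigma> r (Z ** R) S)
     = (real CARD('d) * \<sigma>^2)^2 / (real CARD('n) * real CARD('d))
        * trace (MM (r / real CARD('d)) Z ** MM (r / real CARD('d)) Z ** QQ \<sigma> (Z ** R))"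
proof -
  define X where "X = Z ** R"
  define d where "d = real CARD('d)"
  define n where "n = real CARD('n)"
  define a where "a = d * \<sigma>^2"
  define c where "c = r / d"
  define Q where "Q = QQ \<sigma> X"
  define M where "M = MM c Z"
  define A where "A = Arho \<sigma> r X S"
  define N where "N = X ** A - mat 1"
  have dp: "d > 0" and np: "n > 0" unfolding d_def n_def by simp_all
  have Kinv: "invertible (KK c Z)" using Ki unfolding c_def d_def .
  have Ms: "transpose M = M" using M_facts(4)[OF Kinv] unfolding M_def .
  have NE: "N = - a *\<^sub>R (M ** Q)"
    using L2[OF Rs RR Ri sp Ki] unfolding N_def A_def X_def a_def M_def Q_def c_def d_def by simp
  have Qi: "invertible (X ** transpose X + a *\<^sub>R mat 1)"
    using QQ_inv[OF sp, of X] unfolding a_def d_def .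
  have QY: "Q ** (X ** transpose X + a *\<^sub>R mat 1) = mat 1"
    using minv(2)[OF Qi] unfolding Q_def QQ_def a_def d_def .
  have e1: "X ** A ** X - X = N ** X" unfolding N_def by (simp add: mms)
  have "calT \<sigma> X A = (fi (N ** X) (N ** X) + a * fi N N) / (n * d)"
    unfolding calT_def e1 N_def[symmetric] frob2_fi n_def[symmetric] d_def[symmetric]
    using dp np by (simp add: a_def field_simps)
  also have "fi (N ** X) (N ** X) + a * fi N N = fi (N ** (X ** transpose X + a *\<^sub>R mat 1)) N"
    by (simp add: fi_mul_right matrix_add_ldistrib fi_add_left fi_scale_left mul_mat1_scale matrix_mul_assoc)
  also have "N ** (X ** transpose X + a *\<^sub>R mat 1) = - a *\<^sub>R M"
  proof -
    have "N ** (X ** transpose X + a *\<^sub>R mat 1) = - a *\<^sub>R (M ** (Q ** (X ** transpose X + a *\<^sub>R mat 1)))"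
      unfolding NE by (simp only: mm_scale_l matrix_mul_assoc)
    thus ?thesis using QY by simp
  qed
  also have "fi (- a *\<^sub>R M) N = a^2 * trace (M ** M ** Q)"
  proof -
    have "fi (- a *\<^sub>R M) N = a^2 * fi M (M ** Q)"
      unfolding NE by (simp add: fi_scale_left fi_scale_right fi_neg_left fi_neg_right power2_eq_square)
    also have "fi M (M ** Q) = trace (M ** M ** Q)"
      unfolding fi_trace Ms by (simp add: matrix_mul_assoc)
    finally show ?thesis .
  qed
  finally show ?thesis unfolding X_def A_def a_def M_def Q_def c_def d_def n_def by simp
qed

lemma frob2_add: "frob2 (U + V) = frob2 U + 2 * fi U V + frob2 V"
  unfolding frob2_fi by (simp add: fi_add_left fi_add_right fi_comm[of V U])

lemma L4:
  fixes Z :: "real^'d^'n" and R S :: "real^'d^'d"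
  assumes Rs: "transpose R = R" and RR: "R ** R = S" and Ri: "invertible R" and sp: "\<sigma> > 0"
    and Ki: "invertible (KK (\<rho> / real CARD('d)) Z)" and Rm: "matsqrt S = R"
  shows "calP \<sigma> (Z ** R) S (Arho \<sigma> \<rho> (Z ** R) S) - calP \<sigma> (Z ** R) S (Arho \<sigma> 0 (Z ** R) S)
     = (\<rho> * \<sigma>^2)^2 / real CARD('d)
        * trace (MM (\<rho> / real CARD('d)) Z ** MM (\<rho> / real CARD('d)) Z ** (Z ** transpose Z) ** QQ \<sigma> (Z ** R))"
proof -
  define X where "X = Z ** R"
  define d where "d = real CARD('d)"
  define a where "a = d * \<sigma>^2"
  define c where "c = \<rho> / d"
  define Q where "Q = QQ \<sigma> X"
  define M where "M = MM c Z"
  define K where "K = KK c Z"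
  define G where "G = Z ** transpose Z"
  define t where "t = \<rho> * \<sigma>^2"
  define B where "B = transpose X ** Q"
  define D where "D = - t *\<^sub>R (matrix_inv R ** matrix_inv K ** transpose Z ** Q)"
  define Y where "Y = X ** transpose X + a *\<^sub>R mat 1"
  have dp: "d > 0" unfolding d_def by simp
  have Kinv: "invertible K" using Ki unfolding K_def c_def d_def .
  have K0: "invertible (KK (0 / real CARD('d)) Z)" by (simp add: KK_def invertible_def)
  have A1: "Arho \<sigma> \<rho> X S = B + D"
    using L1[OF Rs RR Ri sp Ki] unfolding X_def B_def D_def Q_def K_def c_def d_def t_def
    by (simp add: algebra_simps)
  have A0: "Arho \<sigma> 0 X S = B"
    using L1[OF Rs RR Ri sp K0] unfolding X_def B_def Q_def by simp
  have Qi: "invertible Y" using QQ_inv[OF sp, of X] unfolding Y_def a_def d_def .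
  have QY: "Q ** Y = mat 1" using minv(2)[OF Qi] unfolding Q_def QQ_def Y_def a_def d_def .
  have QY': "Q ** X ** transpose X = mat 1 - a *\<^sub>R Q"
    using QY unfolding Y_def by (simp add: mms algebra_simps)
  define U1 where "U1 = R ** (B ** X - mat 1)"
  define U2 where "U2 = R ** B"
  define V2 where "V2 = R ** D"
  have P: "calP \<sigma> X S A = (frob2 (R ** (A ** X - mat 1))) / d + \<sigma>^2 * frob2 (R ** A)" for A
    unfolding calP_def Rm d_def ..
  have s1: "R ** ((B + D) ** X - mat 1) = U1 + V2 ** X" unfolding U1_def V2_def by (simp add: mms)
  have s2: "R ** (B + D) = U2 + V2" unfolding U2_def V2_def by (simp add: mms)
  have cross: "fi U1 (V2 ** X) / d + \<sigma>^2 * fi U2 V2 = 0"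
  proof -
    have "U1 ** transpose X = - a *\<^sub>R U2"
    proof -
      have "U1 ** transpose X = R ** (transpose X ** (Q ** X ** transpose X)) - R ** transpose X"
        unfolding U1_def B_def by (simp add: mms)
      also have "\<dots> = - a *\<^sub>R U2" unfolding QY' U2_def B_def by (simp add: mms)
      finally show ?thesis .
    qed
    hence "fi U1 (V2 ** X) = - a * fi U2 V2" by (simp add: fi_mul_right fi_neg_left fi_scale_left)
    thus ?thesis unfolding a_def using dp by simp
  qed
  have V2e: "V2 = - t *\<^sub>R (matrix_inv K ** transpose Z ** Q)"
    unfolding V2_def D_def using minv(1)[OF Ri] by (simp add: mms)
  have quad: "fi (V2 ** X) (V2 ** X) / d + \<sigma>^2 * fi V2 V2 = fi (V2 ** Y) V2 / d"
  proof -
    have "fi (V2 ** X) (V2 ** X) + a * fi V2 V2 = fi (V2 ** Y) V2"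
      unfolding Y_def by (simp add: fi_mul_right matrix_add_ldistrib fi_add_left fi_scale_left mul_mat1_scale matrix_mul_assoc)
    thus ?thesis unfolding a_def using dp by (simp add: field_simps)
  qed
  have V2Y: "V2 ** Y = - t *\<^sub>R (matrix_inv K ** transpose Z)"
  proof -
    have "V2 ** Y = - t *\<^sub>R (matrix_inv K ** transpose Z ** (Q ** Y))"
      unfolding V2e by (simp only: mm_scale_l mm_neg_l matrix_mul_assoc)
    thus ?thesis using QY by simp
  qed
  have iKs: "transpose (matrix_inv K) = matrix_inv K"
    by (rule minv_sym[OF Kinv]) (simp add: K_def KK_sym)
  have ZK: "Z ** matrix_inv K = M ** Z" using M_facts(1)[OF Kinv[unfolded K_def]] unfolding K_def M_def .
  have MG: "M ** G = G ** M" using M_facts(2)[OF Kinv[unfolded K_def]] unfolding G_def M_def .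
  have Ms: "transpose M = M" using M_facts(4)[OF Kinv[unfolded K_def]] unfolding M_def .
  have Gs: "transpose G = G" unfolding G_def by (simp add: matrix_transpose_mul)
  have "fi (V2 ** Y) V2 = t^2 * fi (matrix_inv K ** transpose Z) (matrix_inv K ** (transpose Z ** Q))"
    apply (subst V2Y, subst V2e) by (simp add: fi_scale_left fi_scale_right fi_neg_left fi_neg_right power2_eq_square matrix_mul_assoc)
  also have "fi (matrix_inv K ** transpose Z) (matrix_inv K ** (transpose Z ** Q))
      = fi (Z ** (matrix_inv K ** matrix_inv K ** transpose Z)) Q"
    unfolding fi_mul_left iKs by (simp add: matrix_mul_assoc)
  also have "Z ** (matrix_inv K ** matrix_inv K ** transpose Z) = M ** M ** G"
  proof -
    have "Z ** (matrix_inv K ** matrix_inv K ** transpose Z) = (Z ** matrix_inv K) ** matrix_inv K ** transpose Z"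
      by (simp only: matrix_mul_assoc)
    also have "\<dots> = (M ** Z) ** matrix_inv K ** transpose Z" by (simp only: ZK)
    also have "\<dots> = M ** (Z ** matrix_inv K) ** transpose Z" by (simp only: matrix_mul_assoc)
    also have "\<dots> = M ** (M ** Z) ** transpose Z" by (simp only: ZK)
    finally show ?thesis unfolding G_def by (simp only: matrix_mul_assoc)
  qed
  also have "fi (M ** M ** G) Q = trace (M ** M ** G ** Q)"
  proof -
    have "G ** M ** M = M ** G ** M" by (simp only: MG)
    also have "\<dots> = M ** (G ** M)" by (simp only: matrix_mul_assoc)
    also have "\<dots> = M ** M ** G" by (simp only: MG[symmetric] matrix_mul_assoc)
    finally have "transpose (M ** M ** G) = M ** M ** G"
      by (simp add: matrix_transpose_mul Ms Gs matrix_mul_assoc)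
    thus ?thesis unfolding fi_trace by simp
  qed
  finally have fq: "fi (V2 ** Y) V2 = t^2 * trace (M ** M ** G ** Q)" .
  have "calP \<sigma> X S (Arho \<sigma> \<rho> X S) - calP \<sigma> X S (Arho \<sigma> 0 X S)
      = 2 * (fi U1 (V2 ** X) / d + \<sigma>^2 * fi U2 V2) + (fi (V2 ** X) (V2 ** X) / d + \<sigma>^2 * fi V2 V2)"
    unfolding P A1 A0 s1 s2 frob2_add U1_def[symmetric] U2_def[symmetric]
    by (simp add: frob2_fi algebra_simps add_divide_distrib)
  also have "\<dots> = t^2 / d * trace (M ** M ** G ** Q)"
    unfolding cross quad fq by simp
  finally show ?thesis unfolding X_def t_def d_def M_def c_def G_def Q_def .
qed

lemma psd_AtA: "psd (transpose A ** (A::real^'m^'k))"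
  unfolding psd_def by (simp add: matrix_transpose_mul qf_AtA)

lemma psd_diff_inv:
  fixes A B :: "real^'n^'n"
  assumes sA: "transpose A = A" and sB: "transpose B = B" and iA: "invertible A" and iB: "invertible B"
    and pA: "\<And>x. 0 \<le> x \<bullet> (A *v x)" and le: "\<And>x. x \<bullet> (A *v x) \<le> x \<bullet> (B *v x)"
  shows "psd (matrix_inv A - matrix_inv B)"
  unfolding psd_def
proof (intro conjI allI)
  show "transpose (matrix_inv A - matrix_inv B) = matrix_inv A - matrix_inv B"
    by (simp add: tr_diff minv_sym[OF iA sA] minv_sym[OF iB sB])
  fix x
  have "x \<bullet> (matrix_inv B *v x) \<le> x \<bullet> (matrix_inv A *v x)" by (rule inv_mono[OF sA iA iB pA le])
  thus "0 \<le> x \<bullet> ((matrix_inv A - matrix_inv B) *v x)"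
    by (simp add: matrix_vector_mult_diff_rdistrib inner_diff_right)
qed

lemma psd_MMI:
  fixes Z :: "real^'d^'n"
  assumes Ki: "invertible (KK c Z)" and c0: "c \<ge> 0"
    and Kp: "\<And>u. u \<noteq> 0 \<Longrightarrow> 0 < u \<bullet> (KK c Z *v u)"
  shows "psd (MM c Z ** MM c Z - mat 1)"
  unfolding psd_def
proof (intro conjI allI)
  define M where "M = MM c Z"
  define L where "L = mat 1 - c *\<^sub>R (Z ** transpose Z)"
  have Ms: "transpose M = M" using M_facts(4)[OF Ki] unfolding M_def .
  have Li: "invertible L" unfolding L_def by (rule M_invertible[OF Ki])
  show "transpose (MM c Z ** MM c Z - mat 1) = MM c Z ** MM c Z - mat 1"
    using Ms unfolding M_def by (simp add: tr_diff matrix_transpose_mul)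
  fix x :: "real^'n"
  define y where "y = M *v x"
  define u where "u = transpose Z *v y"
  have xL: "x = L *v y" unfolding y_def M_def MM_def L_def[symmetric]
    by (simp add: matrix_vector_mul_assoc minv(1)[OF Li])
  have q1: "x \<bullet> ((M ** M - mat 1) *v x) = y \<bullet> y - x \<bullet> x"
  proof -
    have "x \<bullet> ((M ** M) *v x) = x \<bullet> (M *v y)" unfolding y_def by (simp only: matrix_vector_mul_assoc)
    also have "\<dots> = (M *v x) \<bullet> y" using dot_mv[of x M y] Ms by simp
    finally show ?thesis unfolding y_def by (simp add: matrix_vector_mult_diff_rdistrib inner_diff_right)
  qed
  have Gy: "(Z ** transpose Z) *v y = Z *v u" unfolding u_def by (simp only: matrix_vector_mul_assoc)
  have yGy: "y \<bullet> ((Z ** transpose Z) *v y) = u \<bullet> u"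
    unfolding u_def using qf_AtA[where A="transpose Z" and x=y] by simp
  have ZuZu: "(Z *v u) \<bullet> (Z *v u) = u \<bullet> ((transpose Z ** Z) *v u)" using qf_AtA[where A=Z and x=u] by simp
  have Ku: "c * ((Z *v u) \<bullet> (Z *v u)) \<le> u \<bullet> u"
  proof -
    have "0 \<le> u \<bullet> (KK c Z *v u)" using Kp[of u] by (cases "u = 0") auto
    also have "u \<bullet> (KK c Z *v u) = u \<bullet> u - c * (u \<bullet> ((transpose Z ** Z) *v u))"
      by (simp add: KK_def matrix_vector_mult_diff_rdistrib inner_diff_right scaleR_matrix_vector_assoc[symmetric])
    finally show ?thesis unfolding ZuZu by simp
  qed
  have xx: "x \<bullet> x = y \<bullet> y - 2 * c * (u \<bullet> u) + c^2 * ((Z *v u) \<bullet> (Z *v u))"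
  proof -
    have ex: "x = y - c *\<^sub>R (Z *v u)" unfolding xL L_def using Gy
      by (simp add: matrix_vector_mult_diff_rdistrib scaleR_matrix_vector_assoc[symmetric])
    have "x \<bullet> x = y \<bullet> y - 2 * c * (y \<bullet> (Z *v u)) + c^2 * ((Z *v u) \<bullet> (Z *v u))"
      unfolding ex by (simp add: inner_diff_left inner_diff_right inner_commute power2_eq_square algebra_simps)
    moreover have "y \<bullet> (Z *v u) = u \<bullet> u" using yGy Gy by simp
    ultimately show ?thesis by simp
  qed
  have "c^2 * ((Z *v u) \<bullet> (Z *v u)) \<le> c * (u \<bullet> u)"
    using mult_left_mono[OF Ku c0] by (simp add: power2_eq_square mult.assoc)
  moreover have "0 \<le> c * (u \<bullet> u)" using c0 by simp
  ultimately have "x \<bullet> x \<le> y \<bullet> y" unfolding xx by linarith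
  thus "0 \<le> x \<bullet> ((MM c Z ** MM c Z - mat 1) *v x)" using q1 unfolding M_def by simp
qed

lemma posdef_kG:
  fixes Z :: "real^'d^'n"
  assumes k: "k \<ge> 0" and a: "a > 0"
  shows "invertible (k *\<^sub>R (Z ** transpose Z) + a *\<^sub>R mat 1)"
    and "transpose (k *\<^sub>R (Z ** transpose Z) + a *\<^sub>R mat 1) = k *\<^sub>R (Z ** transpose Z) + a *\<^sub>R mat 1"
    and "x \<bullet> ((k *\<^sub>R (Z ** transpose Z) + a *\<^sub>R mat 1) *v x) = k * ((transpose Z *v x) \<bullet> (transpose Z *v x)) + a * (x \<bullet> x)"
proof -
  have q: "x \<bullet> ((k *\<^sub>R (Z ** transpose Z) + a *\<^sub>R mat 1) *v x) = k * ((transpose Z *v x) \<bullet> (transpose Z *v x)) + a * (x \<bullet> x)" for x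
    using qf_AtA[where A="transpose Z" and x=x]
    by (simp add: matrix_vector_mult_add_rdistrib inner_add_right scaleR_matrix_vector_assoc[symmetric])
  thus "x \<bullet> ((k *\<^sub>R (Z ** transpose Z) + a *\<^sub>R mat 1) *v x) = k * ((transpose Z *v x) \<bullet> (transpose Z *v x)) + a * (x \<bullet> x)" .
  show "invertible (k *\<^sub>R (Z ** transpose Z) + a *\<^sub>R mat 1)"
  proof (rule posdef_invertible)
    fix x :: "real^'n" assume "x \<noteq> 0"
    hence "a * (x \<bullet> x) > 0" using a by simp
    moreover have "k * ((transpose Z *v x) \<bullet> (transpose Z *v x)) \<ge> 0" using k by simp
    ultimately show "0 < x \<bullet> ((k *\<^sub>R (Z ** transpose Z) + a *\<^sub>R mat 1) *v x)" unfolding q by linarith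
  qed
  show "transpose (k *\<^sub>R (Z ** transpose Z) + a *\<^sub>R mat 1) = k *\<^sub>R (Z ** transpose Z) + a *\<^sub>R mat 1"
    by (simp add: tr_add transpose_scalar matrix_transpose_mul)
qed

theorem lemma7:
  fixes Z :: "real^'d^'n" and S :: "real^'d^'d" and \<sigma> \<rho> \<kappa> :: real
  assumes "CARD('n) \<le> CARD('d)"
    and "invertible (Z ** transpose Z)"
    and "transpose S = S"
    and "\<kappa> > 0"
    and "\<forall>l. mat_eigenvalue S l \<longrightarrow> 1 / \<kappa> \<le> l \<and> l \<le> 1"
    and "\<sigma> > 0"
    and "\<rho> \<ge> 0"
    and "posdef (mat 1 - (\<rho> / real CARD('d)) *\<^sub>R (transpose Z ** Z))"
  shows
    "let d = real CARD('d); n = real CARD('n); X = Z ** matsqrt S;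
         G = Z ** transpose Z;
         M = matrix_inv (mat 1 - (\<rho> / d) *\<^sub>R G)
     in calP \<sigma> X S (Arho \<sigma> \<rho> X S) - calP \<sigma> X S (Arho \<sigma> 0 X S)
          \<ge> \<rho>^2 * \<sigma>^4 / d *
             trace (M ** M ** ((1 / d) *\<^sub>R G) ** matrix_inv ((1 / d) *\<^sub>R G + \<sigma>^2 *\<^sub>R mat 1))
      \<and> calT \<sigma> X (Arho \<sigma> \<rho> X S) - calT \<sigma> X (Arho \<sigma> 0 X S)
          \<le> \<kappa> * \<sigma>^4 / n *
             trace ((M ** M - mat 1) ** matrix_inv ((1 / d) *\<^sub>R G + (\<kappa> * \<sigma>^2) *\<^sub>R mat 1))"
proof -
  define d where "d = real CARD('d)"
  define n where "n = real CARD('n)"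
  define R where "R = matsqrt S"
  define X where "X = Z ** R"
  define G where "G = Z ** transpose Z"
  define c where "c = \<rho> / d"
  define M where "M = MM c Z"
  define a where "a = d * \<sigma>^2"
  define Q where "Q = QQ \<sigma> X"
  have dp: "d > 0" and np: "n > 0" unfolding d_def n_def by simp_all
  have sp: "\<sigma> > 0" and kp: "\<kappa> > 0" and r0: "\<rho> \<ge> 0" using assms by auto
  have ap: "a > 0" unfolding a_def using dp sp by simp
  have c0: "c \<ge> 0" unfolding c_def using r0 dp by simp
  have Ssym: "transpose S = S" by (rule assms(3))
  have eb: "(1/\<kappa>) * (x \<bullet> x) \<le> x \<bullet> (S *v x) \<and> x \<bullet> (S *v x) \<le> 1 * (x \<bullet> x)" for x
    by (rule eig_bounds[OF Ssym]) (use assms(5) in blast)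
  have Spsd: "psd S" unfolding psd_def
  proof (intro conjI allI)
    show "transpose S = S" by (rule Ssym)
    fix x :: "real^'d"
    have "0 \<le> (1/\<kappa>) * (x \<bullet> x)" using kp by simp
    thus "0 \<le> x \<bullet> (S *v x)" using eb[of x] by linarith
  qed
  have Rpsd: "psd R" and RR: "R ** R = S" using matsqrt_props[OF Spsd] unfolding R_def by auto
  have Rs: "transpose R = R" using Rpsd unfolding psd_def by simp
  have Si: "invertible S"
  proof (rule posdef_invertible)
    fix x :: "real^'d" assume "x \<noteq> 0"
    hence "0 < (1/\<kappa>) * (x \<bullet> x)" using kp by simp
    thus "0 < x \<bullet> (S *v x)" using eb[of x] by linarith
  qed
  have Ri: "invertible R"
  proof -
    have "det S \<noteq> 0" using Si invertible_det_nz by blast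
    hence "det R * det R \<noteq> 0" using RR det_mul[of R R] by simp
    thus ?thesis using invertible_det_nz by auto
  qed
  have Kpd: "posdef (KK c Z)" using assms(8) unfolding KK_def c_def d_def .
  have Kp: "\<And>u. u \<noteq> 0 \<Longrightarrow> 0 < u \<bullet> (KK c Z *v u)" using Kpd unfolding posdef_def by blast
  have Ki: "invertible (KK c Z)" by (rule posdef_invertible[OF Kp])
  have Ki': "invertible (KK (\<rho> / real CARD('d)) Z)" using Ki unfolding c_def d_def .
  have K0: "invertible (KK (0 / real CARD('d)) Z)" by (simp add: KK_def invertible_def)
  have M0: "MM (0 / real CARD('d)) Z = mat 1" by (simp add: MM_def minv_one)
  have MG: "M ** G = G ** M" using M_facts(2)[OF Ki] unfolding G_def M_def .
  have Ms: "transpose M = M" using M_facts(4)[OF Ki] unfolding M_def .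
  have Pdiff: "calP \<sigma> X S (Arho \<sigma> \<rho> X S) - calP \<sigma> X S (Arho \<sigma> 0 X S) = (\<rho> * \<sigma>^2)^2 / d * trace (M ** M ** G ** Q)"
    using L4[OF Rs RR Ri sp Ki' R_def[symmetric]] unfolding X_def d_def M_def c_def G_def Q_def .
  have T1: "calT \<sigma> X (Arho \<sigma> \<rho> X S) = a^2 / (n * d) * trace (M ** M ** Q)"
    using L3[OF Rs RR Ri sp Ki'] unfolding X_def d_def n_def a_def M_def c_def Q_def .
  have T0: "calT \<sigma> X (Arho \<sigma> 0 X S) = a^2 / (n * d) * trace Q"
    using L3[OF Rs RR Ri sp K0] unfolding X_def d_def n_def a_def Q_def M0 by simp
  have XX: "X ** transpose X = Z ** S ** transpose Z"
  proof -
    have "X ** transpose X = Z ** (R ** R) ** transpose Z"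
      unfolding X_def using Rs by (simp add: matrix_transpose_mul matrix_mul_assoc)
    thus ?thesis unfolding RR .
  qed
  have Yq: "x \<bullet> ((X ** transpose X) *v x) = (transpose Z *v x) \<bullet> (S *v (transpose Z *v x))" for x
    unfolding XX by (rule qf_conj)
  have Gq: "x \<bullet> (G *v x) = (transpose Z *v x) \<bullet> (transpose Z *v x)" for x
    unfolding G_def using qf_AtA[where A="transpose Z" and x=x] by simp
  have Yi: "invertible (X ** transpose X + a *\<^sub>R mat 1)"
    using QQ_inv[OF sp, of X] unfolding a_def d_def .
  have Ysym: "transpose (X ** transpose X + a *\<^sub>R mat 1) = X ** transpose X + a *\<^sub>R mat 1"
    by (simp add: tr_add transpose_scalar matrix_transpose_mul)
  have Yqf: "x \<bullet> ((X ** transpose X + a *\<^sub>R mat 1) *v x) = x \<bullet> ((X ** transpose X) *v x) + a * (x \<bullet> x)" for x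
    by (simp add: matrix_vector_mult_add_rdistrib inner_add_right scaleR_matrix_vector_assoc[symmetric])
  have Yq0: "0 \<le> x \<bullet> ((X ** transpose X) *v x)" for x
    using qf_AtA[where A="transpose X" and x=x] by simp
  have Qdef: "Q = matrix_inv (X ** transpose X + a *\<^sub>R mat 1)" unfolding Q_def QQ_def a_def d_def ..
  have G1: "1 *\<^sub>R G = G" by simp
  have Gi: "invertible (G + a *\<^sub>R mat 1)" using posdef_kG(1)[of 1 a Z] ap unfolding G_def by simp
  have Gsym: "transpose (G + a *\<^sub>R mat 1) = G + a *\<^sub>R mat 1" using posdef_kG(2)[of 1 a Z] ap unfolding G_def by simp
  have Gqf: "x \<bullet> ((G + a *\<^sub>R mat 1) *v x) = x \<bullet> (G *v x) + a * (x \<bullet> x)" for x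
    by (simp add: matrix_vector_mult_add_rdistrib inner_add_right scaleR_matrix_vector_assoc[symmetric])
  define Q0 where "Q0 = matrix_inv (G + a *\<^sub>R mat 1)"
  have inv1: "matrix_inv ((1 / d) *\<^sub>R G + \<sigma>^2 *\<^sub>R mat 1) = d *\<^sub>R Q0"
  proof -
    have "(1 / d) *\<^sub>R G + \<sigma>^2 *\<^sub>R mat 1 = (1/d) *\<^sub>R (G + a *\<^sub>R mat 1)"
      unfolding a_def using dp by (simp add: scaleR_add_right)
    thus ?thesis unfolding Q0_def using minv_scale[OF Gi, of "1/d"] dp by simp
  qed
  have psdMMG: "psd (M ** M ** G)"
  proof -
    have "transpose (transpose Z ** M) ** (transpose Z ** M) = M ** G ** M"
      using Ms unfolding G_def by (simp add: matrix_transpose_mul matrix_mul_assoc)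
    also have "\<dots> = M ** (G ** M)" by (simp only: matrix_mul_assoc)
    also have "\<dots> = M ** (M ** G)" by (simp only: MG)
    also have "\<dots> = M ** M ** G" by (simp only: matrix_mul_assoc)
    finally show ?thesis using psd_AtA[of "transpose Z ** M"] by simp
  qed
  have psdQQ0: "psd (Q - Q0)" unfolding Qdef Q0_def
  proof (rule psd_diff_inv[OF Ysym Gsym Yi Gi])
    fix x :: "real^'n"
    show "0 \<le> x \<bullet> ((X ** transpose X + a *\<^sub>R mat 1) *v x)" unfolding Yqf using Yq0[of x] ap by simp
    have "x \<bullet> ((X ** transpose X) *v x) \<le> x \<bullet> (G *v x)" unfolding Yq Gq using eb by simp
    thus "x \<bullet> ((X ** transpose X + a *\<^sub>R mat 1) *v x) \<le> x \<bullet> ((G + a *\<^sub>R mat 1) *v x)"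
      unfolding Yqf Gqf by simp
  qed
  have trP: "trace (M ** M ** G ** Q0) \<le> trace (M ** M ** G ** Q)"
  proof -
    have "0 \<le> trace (M ** M ** G ** (Q - Q0))" by (rule trace_psd_nonneg[OF psdMMG psdQQ0])
    thus ?thesis by (simp add: mm_diff_l trace_sub)
  qed
  have partP: "\<rho>^2 * \<sigma>^4 / d * trace (M ** M ** ((1 / d) *\<^sub>R G) ** matrix_inv ((1 / d) *\<^sub>R G + \<sigma>^2 *\<^sub>R mat 1))
      \<le> calP \<sigma> X S (Arho \<sigma> \<rho> X S) - calP \<sigma> X S (Arho \<sigma> 0 X S)"
  proof -
    have "M ** M ** ((1 / d) *\<^sub>R G) ** matrix_inv ((1 / d) *\<^sub>R G + \<sigma>^2 *\<^sub>R mat 1) = M ** M ** G ** Q0"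
      unfolding inv1 using dp by (simp add: mm_scale_l mm_scale_r)
    moreover have "\<rho>^2 * \<sigma>^4 / d * trace (M ** M ** G ** Q0) \<le> \<rho>^2 * \<sigma>^4 / d * trace (M ** M ** G ** Q)"
      using trP dp by (intro mult_left_mono) auto
    ultimately show ?thesis unfolding Pdiff by (simp add: power_mult_distrib power2_eq_square[of "\<sigma>^2"] flip: power_add)
  qed
  have Hi: "invertible ((1/\<kappa>) *\<^sub>R G + a *\<^sub>R mat 1)" using posdef_kG(1)[of "1/\<kappa>" a Z] ap kp unfolding G_def by simp
  have Hsym: "transpose ((1/\<kappa>) *\<^sub>R G + a *\<^sub>R mat 1) = (1/\<kappa>) *\<^sub>R G + a *\<^sub>R mat 1"
    using posdef_kG(2)[of "1/\<kappa>" a Z] ap kp unfolding G_def by simp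
  have Hqf: "x \<bullet> (((1/\<kappa>) *\<^sub>R G + a *\<^sub>R mat 1) *v x) = (1/\<kappa>) * (x \<bullet> (G *v x)) + a * (x \<bullet> x)" for x
    by (simp add: matrix_vector_mult_add_rdistrib inner_add_right scaleR_matrix_vector_assoc[symmetric])
  define Q1 where "Q1 = matrix_inv ((1/\<kappa>) *\<^sub>R G + a *\<^sub>R mat 1)"
  have inv2: "matrix_inv ((1 / d) *\<^sub>R G + (\<kappa> * \<sigma>^2) *\<^sub>R mat 1) = (d / \<kappa>) *\<^sub>R Q1"
  proof -
    have "(1 / d) *\<^sub>R G + (\<kappa> * \<sigma>^2) *\<^sub>R mat 1 = (\<kappa>/d) *\<^sub>R ((1/\<kappa>) *\<^sub>R G + a *\<^sub>R mat 1)"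
      unfolding a_def using dp kp by (simp add: scaleR_add_right)
    thus ?thesis unfolding Q1_def using minv_scale[OF Hi, of "\<kappa>/d"] dp kp by simp
  qed
  have psdMI: "psd (M ** M - mat 1)" using psd_MMI[OF Ki c0 Kp] unfolding M_def .
  have psdQ1Q: "psd (Q1 - Q)" unfolding Qdef Q1_def
  proof (rule psd_diff_inv[OF Hsym Ysym Hi Yi])
    fix x :: "real^'n"
    have "0 \<le> x \<bullet> (G *v x)" unfolding Gq by simp
    thus "0 \<le> x \<bullet> (((1/\<kappa>) *\<^sub>R G + a *\<^sub>R mat 1) *v x)" unfolding Hqf using ap kp by simp
    have "(1/\<kappa>) * (x \<bullet> (G *v x)) \<le> x \<bullet> ((X ** transpose X) *v x)" unfolding Yq Gq using eb by simp
    thus "x \<bullet> (((1/\<kappa>) *\<^sub>R G + a *\<^sub>R mat 1) *v x) \<le> x \<bullet> ((X ** transpose X + a *\<^sub>R mat 1) *v x)"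
      unfolding Yqf Hqf by simp
  qed
  have trT: "trace ((M ** M - mat 1) ** Q) \<le> trace ((M ** M - mat 1) ** Q1)"
  proof -
    have "0 \<le> trace ((M ** M - mat 1) ** (Q1 - Q))" by (rule trace_psd_nonneg[OF psdMI psdQ1Q])
    thus ?thesis by (simp add: mm_diff_l trace_sub)
  qed
  have partT: "calT \<sigma> X (Arho \<sigma> \<rho> X S) - calT \<sigma> X (Arho \<sigma> 0 X S)
      \<le> \<kappa> * \<sigma>^4 / n * trace ((M ** M - mat 1) ** matrix_inv ((1 / d) *\<^sub>R G + (\<kappa> * \<sigma>^2) *\<^sub>R mat 1))"
  proof -
    have lhs: "calT \<sigma> X (Arho \<sigma> \<rho> X S) - calT \<sigma> X (Arho \<sigma> 0 X S) = d * \<sigma>^4 / n * trace ((M ** M - mat 1) ** Q)"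
    proof -
      have "a^2 / (n * d) = d * \<sigma>^4 / n" unfolding a_def using dp np
        by (simp add: power_mult_distrib field_simps power2_eq_square numeral_eq_Suc)
      thus ?thesis unfolding T1 T0 by (simp add: mm_diff_r trace_sub right_diff_distrib)
    qed
    have rhs: "\<kappa> * \<sigma>^4 / n * trace ((M ** M - mat 1) ** matrix_inv ((1 / d) *\<^sub>R G + (\<kappa> * \<sigma>^2) *\<^sub>R mat 1))
        = d * \<sigma>^4 / n * trace ((M ** M - mat 1) ** Q1)"
    proof -
      have "trace ((M ** M - mat 1) ** ((d / \<kappa>) *\<^sub>R Q1)) = (d / \<kappa>) * trace ((M ** M - mat 1) ** Q1)"
        by (simp add: mm_scale_r trace_def sum_distrib_left sum_divide_distrib)
      thus ?thesis unfolding inv2 using kp by simp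
    qed
    have "d * \<sigma>^4 / n * trace ((M ** M - mat 1) ** Q) \<le> d * \<sigma>^4 / n * trace ((M ** M - mat 1) ** Q1)"
      using trT dp np by (intro mult_left_mono) auto
    thus ?thesis unfolding lhs rhs .
  qed
  have eqM: "matrix_inv (mat 1 - (\<rho> / real CARD('d)) *\<^sub>R (Z ** transpose Z)) = M"
    unfolding M_def MM_def c_def d_def ..
  show ?thesis unfolding Let_def eqM
    using partP partT unfolding X_def R_def G_def d_def n_def by simp
qed

end
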